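(* Let $k\ge2$, let $\Pi$ be superweak $k$-coloring, let $\Pi'_1$ be the simplified derived problem of $\Pi$, and let $t$ be a non-negative integer. Let $\mathcal G$ be a graph class such that every graph in $\mathcal G$ is regular of degree at least $2^{4^k+1}$ and the input labels include an orientation of each edge. Set $k':=2^{2^{5^k}}$. If there is an algorithm (port numbering model) that solves $\Pi'_1$ on $\mathcal G$ in time $t$, then there is also an algorithm that solves superweak $k'$-coloring on $\mathcal G$ in time $t$.
   Context: All graphs are simple, undirected, connected; $B(G)$ is the set of pairs $(v,e)$ with $v$ an endpoint of edge $e$. Multisets ignore order; $2^S$ is the power set. Edge orientations are given as input labels encoded at both $(u,e)$ and $(v,e)$. Problems: $\Pi=(\mathcal O,f,g,h)$ with $f(\Delta)\subseteq\mathcal O$ finite, $g(\Delta)$ a set of 2-element multisets over $f(\Delta)$, $h(\Delta)$ a set of multisets of at most $\Delta$ elements of $f(\Delta)$. An algorithm solves $\Pi$ on a class if on each graph of max degree $\Delta$ it outputs $o_{v,e}\in f(\Delta)$ at each $(v,e)\in B(G)$ with $\{o_{u,e},o_{v,e}\}\in g(\Delta)$ for each edge $e=\{u,v\}$ and the multiset of outputs at each node in $h(\Delta)$. Model: port numbering model (nodes know $n,\Delta$ and the input labels at their ports; synchronous rounds; unbounded messages and computation); time $t$ means outputs at $v$ depend only on the radius-$t$ neighborhood of $v$. Superweak $k$-coloring: $f(\Delta)=\{1,\dots,k\}\times\{\rightarrow,\multimap,\bullet\}$ ($\rightarrow$ = demanding pointer, $\multimap$ = accepting pointer, $\bullet$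 = no pointer); $g(\Delta)$ = all $\{(y,y'),(z,z')\}$ with $y\ne z$, or $y'=z'=\bullet$, or $\multimap\in\{y',z'\}$; $h(\Delta)$ = all multisets $\{(y_1,y'_1),\dots,(y_\Delta,y'_\Delta)\}$ with $y_1=\dots=y_\Delta$, such that the number of $i$ with $y'_i=\rightarrow$ is strictly greater than the number of $i$ with $y'_i=\multimap$, and the number of $i$ with $y'_i=\multimap$ is at most $k$. Simplified derived problem: from $\Pi$ define $\Pi'_{1/2}$: $f_{1/2}(\Delta)=2^{f(\Delta)}$; $g'_{1/2}(\Delta)$ = all $\{Y,Z\}$ such that (P) $\{y,z\}\in g(\Delta)$ for all $y\in Y,z\in Z$, with each of $Y,Z$ inclusion-maximal subject to (P) (other fixed); $h_{1/2}(\Delta)$ = all $\{Y_1,\dots,Y_i\}$, $i\le\Delta$, with some $y_j\in Y_j$ satisfying $\{y_1,\dots,y_i\}\in h(\Delta)$. Then $\Pi'_1$: $f_1(\Delta)=2^{f_{1/2}(\Delta)}$; $g_1(\Delta)$ = all $\{Y,Z\}$ with some $y\in Y,z\in Z$ satisfying $\{y,z\}\in g'_{1/2}(\Delta)$; $h'_1(\Delta)$ = all $\{Y_1,\dots,Y_i\}$, $i\le\Delta$, such that (Q) $\{y_1,\dots,y_i\}\in h_{1/2}(\Delta)$ for all $y_j\in Y_j$, with each $Y_j$ inclusion-maximal subject to (Q) (others fixed). *)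

theory Defs
  imports Main "HOL-Library.Multiset"
begin

text \<open>Port i (0 \<le> i < deg v) of node v corresponds to the half-edge (v,e) of B(G);
  port G (v,i) = (u,j) means the edge at port i of v is attached to port j of u.
  inp G (v,i) is the input label at the half-edge (v,i).\<close>

record ('v, 'l) pgraph =
  verts :: "'v set"
  deg   :: "'v \<Rightarrow> nat"
  port  :: "'v \<times> nat \<Rightarrow> 'v \<times> nat"
  inp   :: "'v \<times> nat \<Rightarrow> 'l"

definition adj_rel :: "('v, 'l) pgraph \<Rightarrow> ('v \<times> 'v) set" where
  "adj_rel G = {(v, fst (port G (v, i))) | v i. v \<in> verts G \<and> i < deg G v}"

definition pn_graph :: "('v, 'l) pgraph \<Rightarrow> bool" where
  "pn_graph G \<longleftrightarrow>
     finite (verts G) \<and> verts G \<noteq> {} \<and>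
     (\<forall>v \<in> verts G. \<forall>i < deg G v.
        fst (port G (v, i)) \<in> verts G \<and>
        snd (port G (v, i)) < deg G (fst (port G (v, i))) \<and>
        port G (port G (v, i)) = (v, i) \<and>
        fst (port G (v, i)) \<noteq> v) \<and>
     (\<forall>v \<in> verts G. \<forall>i < deg G v. \<forall>j < deg G v.
        i \<noteq> j \<longrightarrow> fst (port G (v, i)) \<noteq> fst (port G (v, j))) \<and>
     (\<forall>u \<in> verts G. \<forall>w \<in> verts G. (u, w) \<in> (adj_rel G)\<^sup>*)"

definition maxdeg :: "('v, 'l) pgraph \<Rightarrow> nat" where
  "maxdeg G = Max (deg G ` verts G)"

definition num_nodes :: "('v, 'l) pgraph \<Rightarrow> nat" where
  "num_nodes G = card (verts G)"

text \<open>The radius-t view of a node in the port numbering model: the input labels at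
  its own ports, and for each port i (in port order) the port number at the far end
  together with the radius-(t-1) view of the neighbour. The degree is the length.\<close>
datatype 'l view = View "'l list" "(nat \<times> 'l view) list"

fun tview :: "('v, 'l) pgraph \<Rightarrow> nat \<Rightarrow> 'v \<Rightarrow> 'l view" where
  "tview G 0 v = View (map (\<lambda>i. inp G (v, i)) [0..<deg G v]) []"
| "tview G (Suc t) v = View (map (\<lambda>i. inp G (v, i)) [0..<deg G v])
      (map (\<lambda>i. (snd (port G (v, i)), tview G t (fst (port G (v, i))))) [0..<deg G v])"

text \<open>A time-t algorithm (nodes know n and \<Delta>; unbounded computation) is a map from
  (n, \<Delta>, radius-t view) to the outputs on the ports (indexed by port number).\<close>
type_synonym ('l, 'o) pn_alg = "nat \<Rightarrow> nat \<Rightarrow> 'l view \<Rightarrow> nat \<Rightarrow> 'o"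

definition alg_out :: "('l, 'o) pn_alg \<Rightarrow> nat \<Rightarrow> ('v, 'l) pgraph \<Rightarrow> 'v \<times> nat \<Rightarrow> 'o" where
  "alg_out A t G vi = A (num_nodes G) (maxdeg G) (tview G t (fst vi)) (snd vi)"

record 'o problem =
  outs  :: "nat \<Rightarrow> 'o set"
  edgec :: "nat \<Rightarrow> 'o multiset set"
  nodec :: "nat \<Rightarrow> 'o multiset set"

definition solves_with :: "'o problem \<Rightarrow> ('v, 'l) pgraph \<Rightarrow> ('v \<times> nat \<Rightarrow> 'o) \<Rightarrow> bool" where
  "solves_with P G out \<longleftrightarrow>
     (\<forall>v \<in> verts G. \<forall>i < deg G v. out (v, i) \<in> outs P (maxdeg G)) \<and>
     (\<forall>v \<in> verts G. \<forall>i < deg G v. {# out (v, i), out (port G (v, i)) #} \<in> edgec P (maxdeg G)) \<and>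
     (\<forall>v \<in> verts G. mset (map (\<lambda>i. out (v, i)) [0..<deg G v]) \<in> nodec P (maxdeg G))"

definition pn_solves :: "'o problem \<Rightarrow> ('v, 'l) pgraph set \<Rightarrow> ('l, 'o) pn_alg \<Rightarrow> nat \<Rightarrow> bool" where
  "pn_solves P Gs A t \<longleftrightarrow> (\<forall>G \<in> Gs. solves_with P G (alg_out A t G))"

definition f_half :: "'o problem \<Rightarrow> nat \<Rightarrow> 'o set set" where
  "f_half P D = Pow (outs P D)"

definition compat :: "'o problem \<Rightarrow> nat \<Rightarrow> 'o set \<Rightarrow> 'o set \<Rightarrow> bool" where
  "compat P D Y Z \<longleftrightarrow> (\<forall>y \<in> Y. \<forall>z \<in> Z. {#y, z#} \<in> edgec P D)"

definition g'_half :: "'o problem \<Rightarrow> nat \<Rightarrow> 'o set multiset set" where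
  "g'_half P D = {{#Y, Z#} | Y Z. Y \<in> f_half P D \<and> Z \<in> f_half P D \<and> compat P D Y Z \<and>
      (\<forall>Y'. Y \<subseteq> Y' \<and> Y' \<in> f_half P D \<and> compat P D Y' Z \<longrightarrow> Y' = Y) \<and>
      (\<forall>Z'. Z \<subseteq> Z' \<and> Z' \<in> f_half P D \<and> compat P D Y Z' \<longrightarrow> Z' = Z)}"

definition h_half :: "'o problem \<Rightarrow> nat \<Rightarrow> 'o set multiset set" where
  "h_half P D = {mset Ys | Ys. length Ys \<le> D \<and> set Ys \<subseteq> f_half P D \<and>
      (\<exists>ys. list_all2 (\<in>) ys Ys \<and> mset ys \<in> nodec P D)}"

definition f_one :: "'o problem \<Rightarrow> nat \<Rightarrow> 'o set set set" where
  "f_one P D = Pow (f_half P D)"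

definition g_one :: "'o problem \<Rightarrow> nat \<Rightarrow> 'o set set multiset set" where
  "g_one P D = {{#Y, Z#} | Y Z. Y \<in> f_one P D \<and> Z \<in> f_one P D \<and>
      (\<exists>y \<in> Y. \<exists>z \<in> Z. {#y, z#} \<in> g'_half P D)}"

definition allsel :: "'o problem \<Rightarrow> nat \<Rightarrow> 'o set set list \<Rightarrow> bool" where
  "allsel P D Ys \<longleftrightarrow> (\<forall>ys. list_all2 (\<in>) ys Ys \<longrightarrow> mset ys \<in> h_half P D)"

definition h'_one :: "'o problem \<Rightarrow> nat \<Rightarrow> 'o set set multiset set" where
  "h'_one P D = {mset Ys | Ys. length Ys \<le> D \<and> set Ys \<subseteq> f_one P D \<and> allsel P D Ys \<and>
      (\<forall>j < length Ys. \<forall>Y'. Ys ! j \<subseteq> Y' \<and> Y' \<in> f_one P D \<and> allsel P D (Ys[j := Y'])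
          \<longrightarrow> Y' = Ys ! j)}"

definition derived_one :: "'o problem \<Rightarrow> 'o set set problem" where
  "derived_one P = \<lparr> outs = f_one P, edgec = g_one P, nodec = h'_one P \<rparr>"

datatype ptr = Demand | Accept | NoPtr

definition superweak :: "nat \<Rightarrow> (nat \<times> ptr) problem" where
  "superweak k = \<lparr>
     outs = (\<lambda>D. {1..k} \<times> UNIV),
     edgec = (\<lambda>D. {{#(y, y'), (z, z')#} | y y' z z'.
                   y \<noteq> z \<or> (y' = NoPtr \<and> z' = NoPtr) \<or> y' = Accept \<or> z' = Accept}),
     nodec = (\<lambda>D. {M. size M = D \<and> set_mset M \<subseteq> {1..k} \<times> UNIV \<and>
                   (\<exists>c. \<forall>x \<in># M. fst x = c) \<and>
                   size (filter_mset (\<lambda>x. snd x = Demand) M) > size (filter_mset (\<lambda>x. snd x = Accept) M) \<and>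
                   size (filter_mset (\<lambda>x. snd x = Accept) M) \<le> k}) \<rparr>"

end

theory Submission
  imports Defs "HOL-Combinatorics.Permutations"
begin

lemma hall:
  assumes "finite D" "\<forall>j\<in>D. finite (A j)"
    and "\<forall>J\<subseteq>D. card J \<le> card (\<Union>(A ` J))"
  shows "\<exists>f. inj_on f D \<and> (\<forall>j\<in>D. f j \<in> A j)"
  using assms
proof (induct "card D" arbitrary: D A rule: less_induct)
  case less
  show ?case
  proof (cases "D = {}")
    case True then show ?thesis by auto
  next
    case False
    show ?thesis
    proof (cases "\<forall>J. J \<subseteq> D \<and> J \<noteq> {} \<and> J \<noteq> D \<longrightarrow> card J < card (\<Union>(A ` J))")
      case True
      obtain x where x: "x \<in> D" using False by auto
      have "card {x} \<le> card (\<Union>(A ` {x}))" using less.prems(3) x by auto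
      then have "A x \<noteq> {}" by auto
      then obtain y where y: "y \<in> A x" by auto
      define D' where "D' = D - {x}"
      define A' where "A' = (\<lambda>j. A j - {y})"
      have fD': "finite D'" using less.prems(1) D'_def by auto
      have cD': "card D' < card D" unfolding D'_def using less.prems(1) x by (rule card_Diff1_less)
      have fA': "\<forall>j\<in>D'. finite (A' j)" using less.prems(2) A'_def D'_def by auto
      have hA': "\<forall>J\<subseteq>D'. card J \<le> card (\<Union>(A' ` J))"
      proof (intro allI impI)
        fix J assume J: "J \<subseteq> D'"
        show "card J \<le> card (\<Union>(A' ` J))"
        proof (cases "J = {}")
          case True then show ?thesis by simp
        next
          case False
          have "J \<subseteq> D" "J \<noteq> D" using J x D'_def by auto
          then have lt: "card J < card (\<Union>(A ` J))" using True False by blast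
          have eq: "\<Union>(A' ` J) = \<Union>(A ` J) - {y}" using A'_def by auto
          have fin: "finite (\<Union>(A ` J))"
          proof (rule finite_UN_I)
            show "finite J" using \<open>J \<subseteq> D\<close> less.prems(1) finite_subset by blast
            show "\<And>a. a \<in> J \<Longrightarrow> finite (A a)" using less.prems(2) \<open>J \<subseteq> D\<close> by blast
          qed
          have "card (\<Union>(A ` J) - {y}) = (if y \<in> \<Union>(A ` J) then card (\<Union>(A ` J)) - 1 else card (\<Union>(A ` J)))"
            by (rule card_Diff_singleton_if)
          then have "card (\<Union>(A ` J)) \<le> card (\<Union>(A ` J) - {y}) + 1"
            by (simp split: if_splits)
          then show ?thesis unfolding eq using lt by linarith
        qed
      qed
      obtain g where g: "inj_on g D'" "\<forall>j\<in>D'. g j \<in> A' j"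
        using less.hyps[OF cD' fD' fA' hA'] by blast
      define f where "f = g(x := y)"
      have "inj_on f D"
      proof (rule inj_onI)
        fix a b assume ab: "a \<in> D" "b \<in> D" "f a = f b"
        show "a = b"
        proof (cases "a = x"; cases "b = x")
          assume "a = x" "b = x" then show ?thesis by simp
        next
          assume "a = x" "b \<noteq> x"
          then have "f b = g b" "g b \<in> A' b" using f_def g ab D'_def by auto
          then show ?thesis using ab \<open>a = x\<close> f_def A'_def by auto
        next
          assume "a \<noteq> x" "b = x"
          then have "f a = g a" "g a \<in> A' a" using f_def g ab D'_def by auto
          then show ?thesis using ab \<open>b = x\<close> f_def A'_def by auto
        next
          assume "a \<noteq> x" "b \<noteq> x"
          then show ?thesis using ab g(1) f_def D'_def by (auto dest: inj_onD)
        qed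
      qed
      moreover have "\<forall>j\<in>D. f j \<in> A j" using g(2) y f_def A'_def D'_def by auto
      ultimately show ?thesis by (intro exI[of _ f] conjI)
    next
      case False2: False
      then obtain J where J0: "J \<subseteq> D" "J \<noteq> {}" "J \<noteq> D" "\<not> card J < card (\<Union>(A ` J))" by blast
      then have J: "J \<subseteq> D" "J \<noteq> {}" "J \<noteq> D" "card (\<Union>(A ` J)) \<le> card J" by auto
      have fJ: "finite J" using J less.prems(1) finite_subset by auto
      have cJ: "card J < card D" using J less.prems(1) by (meson psubsetI psubset_card_mono)
      have fAJ: "\<forall>j\<in>J. finite (A j)" using less.prems(2) J(1) by blast
      have hAJ: "\<forall>J'\<subseteq>J. card J' \<le> card (\<Union>(A ` J'))" using less.prems(3) J(1) by blast
      obtain g1 where g1: "inj_on g1 J" "\<forall>j\<in>J. g1 j \<in> A j"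
        using less.hyps[OF cJ fJ fAJ hAJ] by blast
      define B where "B = \<Union>(A ` J)"
      have fB: "finite B" using B_def fJ less.prems(2) J by auto
      define A'' where "A'' = (\<lambda>j. A j - B)"
      define D2 where "D2 = D - J"
      have fD2: "finite D2" using D2_def less.prems(1) by auto
      have cD2: "card D2 < card D" using D2_def J less.prems(1)
        by (metis Diff_subset card_Diff_subset card_gt_0_iff diff_less finite_subset psubsetI psubset_card_mono subset_empty)
      have fA'': "\<forall>j\<in>D2. finite (A'' j)" using less.prems(2) A''_def D2_def by auto
      have hA'': "\<forall>K\<subseteq>D2. card K \<le> card (\<Union>(A'' ` K))"
      proof (intro allI impI)
        fix K assume K: "K \<subseteq> D2"
        have fK: "finite K" using K fD2 finite_subset by auto
        have KJ: "K \<union> J \<subseteq> D" using K J D2_def by auto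
        have disj: "K \<inter> J = {}" using K D2_def by auto
        have "card (K \<union> J) \<le> card (\<Union>(A ` (K \<union> J)))" using less.prems(3) KJ by blast
        moreover have "\<Union>(A ` (K \<union> J)) = \<Union>(A'' ` K) \<union> B" using A''_def B_def by auto
        moreover have "finite (\<Union>(A'' ` K))" using fK fA'' K by auto
        ultimately have "card (K \<union> J) \<le> card (\<Union>(A'' ` K)) + card B"
          by (metis card_Un_le order_trans)
        moreover have "card (K \<union> J) = card K + card J" using fK fJ disj card_Un_disjoint by blast
        ultimately show "card K \<le> card (\<Union>(A'' ` K))" using J(4)[folded B_def] by linarith
      qed
      obtain g2 where g2: "inj_on g2 D2" "\<forall>j\<in>D2. g2 j \<in> A'' j"
        using less.hyps[OF cD2 fD2 fA'' hA''] by blast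
      define f where "f = (\<lambda>j. if j \<in> J then g1 j else g2 j)"
      have "inj_on f D"
      proof (rule inj_onI)
        fix a b assume ab: "a \<in> D" "b \<in> D" "f a = f b"
        have g1B: "\<forall>j\<in>J. g1 j \<in> B" using g1(2) B_def by auto
        have g2B: "\<forall>j\<in>D2. g2 j \<notin> B" using g2(2) A''_def by auto
        show "a = b"
          using ab g1B g2B g1(1) g2(1) unfolding f_def D2_def
          by (auto split: if_splits dest: inj_onD) (metis DiffI)+
      qed
      moreover have "\<forall>j\<in>D. f j \<in> A j" using g1(2) g2(2) f_def A''_def D2_def by auto
      ultimately show ?thesis by (intro exI[of _ f] conjI)
    qed
  qed
qed

lemma pairing:
  assumes "finite D" "inj_on f D" "\<forall>j\<in>D. R j (f j)" "\<forall>x y. R x y \<longrightarrow> R y x"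
    "\<forall>x y. R x y \<longrightarrow> (dr x \<longleftrightarrow> \<not> dr y)"
  shows "\<exists>mate Pd. D \<subseteq> Pd \<and> Pd \<subseteq> D \<union> f ` D \<and>
           (\<forall>j\<in>Pd. mate j \<in> Pd \<and> mate (mate j) = j \<and> R j (mate j))"
  using assms(1-3)
proof (induct "card D" arbitrary: D rule: less_induct)
  case less
  show ?case
  proof (cases "\<exists>j\<in>D. j \<notin> f ` D")
    case True
    then obtain j where j: "j \<in> D" "j \<notin> f ` D" by blast
    define p where "p = f j"
    have Rjp: "R j p" using less.prems(3) j p_def by blast
    have jp: "j \<noteq> p" using Rjp assms(5) by blast
    define D' where "D' = D - {j, p}"
    have fD': "finite D'" using less.prems(1) D'_def by auto
    have cD': "card D' < card D" using less.prems(1) j D'_def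
      by (metis Diff_iff Diff_subset insertI1 psubsetI psubset_card_mono)
    have iD': "inj_on f D'" using less.prems(2) D'_def by (auto intro: inj_on_subset)
    have RD': "\<forall>j\<in>D'. R j (f j)" using less.prems(3) D'_def by auto
    obtain mate' Pd' where m': "D' \<subseteq> Pd'" "Pd' \<subseteq> D' \<union> f ` D'"
      "\<forall>x\<in>Pd'. mate' x \<in> Pd' \<and> mate' (mate' x) = x \<and> R x (mate' x)"
      using less.hyps[OF cD' fD' iD' RD'] by blast
    have jn: "j \<notin> Pd'" using m'(2) j D'_def by auto
    have pn: "p \<notin> Pd'"
    proof
      assume "p \<in> Pd'"
      then have "p \<in> D' \<or> p \<in> f ` D'" using m'(2) by auto
      moreover have "p \<notin> D'" using D'_def by auto
      ultimately obtain x where x: "x \<in> D'" "f x = f j" using p_def by auto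
      then have "x = j" using less.prems(2) D'_def j(1) by (auto dest: inj_onD)
      then show False using x D'_def by auto
    qed
    define mate where "mate = mate'(j := p, p := j)"
    define Pd where "Pd = Pd' \<union> {j, p}"
    have "D \<subseteq> Pd" using m'(1) D'_def Pd_def by auto
    moreover have "Pd \<subseteq> D \<union> f ` D" using m'(2) D'_def Pd_def p_def j by auto
    moreover have "\<forall>x\<in>Pd. mate x \<in> Pd \<and> mate (mate x) = x \<and> R x (mate x)"
    proof
      fix x assume x: "x \<in> Pd"
      show "mate x \<in> Pd \<and> mate (mate x) = x \<and> R x (mate x)"
      proof (cases "x \<in> Pd'")
        case True
        then have "x \<noteq> j" "x \<noteq> p" using jn pn by auto
        moreover have "mate' x \<noteq> j" "mate' x \<noteq> p" using m'(3) True jn pn by metis+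
        ultimately show ?thesis using m'(3) True mate_def Pd_def by auto
      next
        case False
        then have "x = j \<or> x = p" using x Pd_def by auto
        then show ?thesis using jp Rjp assms(4) mate_def Pd_def by auto
      qed
    qed
    ultimately show ?thesis by (intro exI[of _ mate] exI[of _ Pd] conjI)
  next
    case False
    then have sub: "D \<subseteq> f ` D" by blast
    have cimg: "card (f ` D) = card D" using less.prems(2) by (rule card_image)
    have fimg: "finite (f ` D)" using less.prems(1) by auto
    have eqD: "f ` D = D" using card_subset_eq[OF fimg sub] cimg by simp
    define mate where "mate = (\<lambda>j. if dr j then f j else (THE x. x \<in> D \<and> f x = j))"
    have the_eq: "\<And>x. x \<in> D \<Longrightarrow> (THE y. y \<in> D \<and> f y = f x) = x"
      using less.prems(2) by (auto dest: inj_onD)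
    have "\<forall>x\<in>D. mate x \<in> D \<and> mate (mate x) = x \<and> R x (mate x)"
    proof
      fix x assume x: "x \<in> D"
      show "mate x \<in> D \<and> mate (mate x) = x \<and> R x (mate x)"
      proof (cases "dr x")
        case True
        have R1: "R x (f x)" using less.prems(3) x by blast
        then have "\<not> dr (f x)" using True assms(5) by blast
        then have "mate (f x) = x" using mate_def the_eq[OF x] by simp
        moreover have "f x \<in> D" using x eqD by blast
        ultimately show ?thesis using True mate_def R1 by simp
      next
        case False
        obtain y where y: "y \<in> D" "x = f y" using x eqD by blast
        have R1: "R y x" using less.prems(3) y by blast
        then have dy: "dr y" using False assms(5) by blast
        have "mate x = y" using False mate_def the_eq[OF y(1)] y(2) by simp
        then show ?thesis using y dy R1 assms(4) mate_def by simp
      qed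
    qed
    then show ?thesis by (intro exI[of _ mate] exI[of _ D]) auto
  qed
qed

definition crel :: "('c \<Rightarrow> 'y set) \<Rightarrow> ('c \<Rightarrow> bool) \<Rightarrow> ('y \<Rightarrow> 'y \<Rightarrow> bool) \<Rightarrow> 'c \<Rightarrow> 'c \<Rightarrow> bool" where
  "crel R dr cp a b \<longleftrightarrow> (dr a \<longleftrightarrow> \<not> dr b) \<and> (\<exists>y\<in>R a. \<exists>z\<in>R b. cp y z)"

definition nbs :: "('c \<Rightarrow> 'y set) \<Rightarrow> ('c \<Rightarrow> bool) \<Rightarrow> ('y \<Rightarrow> 'y \<Rightarrow> bool) \<Rightarrow> 'c set \<Rightarrow> 'c set" where
  "nbs R dr cp I = {b. \<exists>a\<in>I. crel R dr cp a b}"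

definition cnt :: "nat \<Rightarrow> (nat \<Rightarrow> 'c) \<Rightarrow> 'c set \<Rightarrow> nat" where
  "cnt d cls X = card {j. j < d \<and> cls j \<in> X}"

definition goodw :: "('c \<Rightarrow> 'y set) \<Rightarrow> ('c \<Rightarrow> bool) \<Rightarrow> ('y \<Rightarrow> 'y \<Rightarrow> bool) \<Rightarrow> nat \<Rightarrow> (nat \<Rightarrow> 'c) \<Rightarrow> nat \<Rightarrow> 'c set \<Rightarrow> bool" where
  "goodw R dr cp d cls Kb I \<longleftrightarrow> (\<forall>a\<in>I. a \<notin> nbs R dr cp I) \<and>
     cnt d cls (nbs R dr cp I) < cnt d cls I \<and> cnt d cls (nbs R dr cp I) \<le> Kb"

fun theta :: "nat \<Rightarrow> nat \<Rightarrow> nat \<Rightarrow> nat" where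
  "theta Nc k 0 = 0"
| "theta Nc k (Suc i) = Nc * (theta Nc k i + k + 1)"

definition rnk :: "(nat \<Rightarrow> 'c) \<Rightarrow> nat \<Rightarrow> nat" where
  "rnk cls p = card {q. q < p \<and> cls q = cls p}"

lemma theta_lt: "1 \<le> Nc \<Longrightarrow> theta Nc k i < theta Nc k (Suc i)"
proof -
  assume "1 \<le> Nc"
  then have "1 * (theta Nc k i + k + 1) \<le> Nc * (theta Nc k i + k + 1)" by (rule mult_le_mono1)
  then have "theta Nc k i + k + 1 \<le> theta Nc k (Suc i)" by simp
  then show ?thesis by linarith
qed

lemma theta_mono: "1 \<le> Nc \<Longrightarrow> i \<le> j \<Longrightarrow> theta Nc k i \<le> theta Nc k j"
proof (induct j)
  case 0 then show ?case by simp
next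
  case (Suc j)
  show ?case
  proof (cases "i = Suc j")
    case True then show ?thesis by simp
  next
    case False
    then have "theta Nc k i \<le> theta Nc k j" using Suc by simp
    then show ?thesis using theta_lt[OF Suc.prems(1), of k j] by simp
  qed
qed

lemma theta_bound: "theta Nc k i \<le> (k + 1) * (2 * Nc) ^ i"
proof (induct i)
  case 0 then show ?case by simp
next
  case (Suc i)
  show ?case
  proof (cases "Nc = 0")
    case True then show ?thesis by simp
  next
    case False
    define X where "X = (2 * Nc) ^ i"
    have X1: "1 \<le> X" using False X_def by simp
    have "(k + 1) * 1 \<le> (k + 1) * X" using X1 by (rule mult_le_mono2)
    then have kX: "k + 1 \<le> (k + 1) * X" by simp
    have IH: "theta Nc k i \<le> (k + 1) * X" using Suc X_def by simp
    have "theta Nc k (Suc i) = Nc * (theta Nc k i + (k + 1))" by simp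
    also have "\<dots> \<le> Nc * ((k + 1) * X + (k + 1) * X)"
      by (intro mult_le_mono2 add_le_mono IH kX)
    also have "\<dots> = (k + 1) * (2 * Nc) ^ Suc i" by (simp add: X_def algebra_simps)
    finally show ?thesis .
  qed
qed

lemma gap:
  assumes "finite U" "card U \<le> Nc" "1 \<le> Nc"
  shows "\<exists>i\<le>Nc. \<forall>a\<in>U. \<not> (theta Nc k i \<le> m a \<and> m a < theta Nc k (Suc i))"
proof (rule ccontr)
  assume "\<not> ?thesis"
  then have "\<forall>i\<in>{..Nc}. \<exists>a\<in>U. theta Nc k i \<le> m a \<and> m a < theta Nc k (Suc i)" by auto
  then obtain g where g: "\<forall>i\<in>{..Nc}. g i \<in> U \<and> theta Nc k i \<le> m (g i) \<and> m (g i) < theta Nc k (Suc i)"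
    by metis
  have "inj_on g {..Nc}"
  proof (rule inj_onI)
    fix i j assume ij: "i \<in> {..Nc}" "j \<in> {..Nc}" "g i = g j"
    show "i = j"
    proof (rule ccontr)
      assume "i \<noteq> j"
      then consider "i < j" | "j < i" by linarith
      then show False
      proof cases
        case 1
        then have th: "theta Nc k (Suc i) \<le> theta Nc k j" using theta_mono[OF assms(3), of "Suc i" j] by simp
        have a: "m (g i) < theta Nc k (Suc i)" and b: "theta Nc k j \<le> m (g j)" using g ij(1,2) by auto
        have "m (g j) < theta Nc k (Suc i)" using a ij(3) by simp
        then show False using b th by linarith
      next
        case 2
        then have th: "theta Nc k (Suc j) \<le> theta Nc k i" using theta_mono[OF assms(3), of "Suc j" i] by simp
        have a: "m (g j) < theta Nc k (Suc j)" and b: "theta Nc k i \<le> m (g i)" using g ij(1,2) by auto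
        have "m (g i) < theta Nc k (Suc j)" using a ij(3) by simp
        then show False using b th by linarith
      qed
    qed
  qed
  then have c1: "card (g ` {..Nc}) = Nc + 1" by (simp add: card_image)
  have sub: "g ` {..Nc} \<subseteq> U" using g by auto
  have "card (g ` {..Nc}) \<le> card U" by (rule card_mono[OF assms(1) sub])
  then show False using assms(2) c1 by linarith
qed

lemma rnk_lt:
  assumes "p < d" shows "rnk cls p < cnt d cls {cls p}"
proof -
  have "{q. q < p \<and> cls q = cls p} \<subset> {j. j < d \<and> cls j \<in> {cls p}}" using assms by auto
  then show ?thesis unfolding rnk_def cnt_def by (rule psubset_card_mono[rotated]) simp
qed

lemma rnk_mono:
  assumes "p < p'" "cls p = cls p'" shows "rnk cls p < rnk cls p'"
proof -
  have "{q. q < p \<and> cls q = cls p} \<subset> {q. q < p' \<and> cls q = cls p'}" using assms by auto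
  then show ?thesis unfolding rnk_def by (rule psubset_card_mono[rotated]) simp
qed

lemma rnk_inj: "inj_on (rnk cls) {p. cls p = b}"
proof (rule inj_onI)
  fix p p' assume h: "p \<in> {p. cls p = b}" "p' \<in> {p. cls p = b}" "rnk cls p = rnk cls p'"
  then have c: "cls p = cls p'" by simp
  show "p = p'"
  proof (rule ccontr)
    assume "p \<noteq> p'"
    then consider "p < p'" | "p' < p" by linarith
    then show False
    proof cases
      case 1 then show False using rnk_mono[OF 1 c] h(3) by simp
    next
      case 2 then show False using rnk_mono[OF 2 c[symmetric]] h(3) by simp
    qed
  qed
qed

lemma rnk_img: "rnk cls ` {p. p < d \<and> cls p = b} = {..<cnt d cls {b}}"
proof -
  let ?S = "{p. p < d \<and> cls p = b}"
  have S: "?S = {j. j < d \<and> cls j \<in> {b}}" by auto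
  have sub: "rnk cls ` ?S \<subseteq> {..<cnt d cls {b}}"
  proof
    fix r assume "r \<in> rnk cls ` ?S"
    then obtain p where p: "p < d" "cls p = b" "r = rnk cls p" by auto
    show "r \<in> {..<cnt d cls {b}}" using rnk_lt[OF p(1), of cls] p by simp
  qed
  have "inj_on (rnk cls) ?S" using rnk_inj[of cls b] by (rule inj_on_subset) auto
  then have "card (rnk cls ` ?S) = card ?S" by (rule card_image)
  also have "\<dots> = cnt d cls {b}" unfolding cnt_def by (simp only: S)
  finally have c: "card (rnk cls ` ?S) = card {..<cnt d cls {b}}" by simp
  show ?thesis by (rule card_subset_eq[OF finite_lessThan sub c])
qed

lemma card_rnk:
  assumes "X \<subseteq> {..<cnt d cls {b}}"
  shows "card {p. p < d \<and> cls p = b \<and> rnk cls p \<in> X} = card X"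
proof -
  let ?T = "{p. p < d \<and> cls p = b \<and> rnk cls p \<in> X}"
  have "inj_on (rnk cls) ?T" using rnk_inj[of cls b] by (rule inj_on_subset) auto
  moreover have img: "rnk cls ` ?T = X"
  proof
    show "rnk cls ` ?T \<subseteq> X" by auto
    show "X \<subseteq> rnk cls ` ?T"
    proof
      fix r assume r: "r \<in> X"
      have "r \<in> {..<cnt d cls {b}}" using assms r by blast
      then have "r \<in> rnk cls ` {p. p < d \<and> cls p = b}" unfolding rnk_img .
      then obtain p where "p < d" "cls p = b" "rnk cls p = r" by auto
      then show "r \<in> rnk cls ` ?T" using r by auto
    qed
  qed
  ultimately have "card (rnk cls ` ?T) = card ?T" by (intro card_image)
  then show ?thesis using img by simp
qed

lemma card_classes_le:
  assumes "finite U" "\<forall>j<d. cls j \<in> U" "\<forall>a\<in>U. Q a \<longrightarrow> cnt d cls {a} \<le> t"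
  shows "card {j. j < d \<and> Q (cls j)} \<le> card U * t"
proof -
  have eq: "{j. j < d \<and> Q (cls j)} = (\<Union>a\<in>{a\<in>U. Q a}. {j. j < d \<and> cls j = a})" using assms(2) by auto
  have "card {j. j < d \<and> Q (cls j)} \<le> (\<Sum>a\<in>{a\<in>U. Q a}. card {j. j < d \<and> cls j = a})"
    unfolding eq by (rule card_UN_le) (simp add: assms(1))
  also have "\<dots> \<le> (\<Sum>a\<in>{a\<in>U. Q a}. t)"
  proof (rule sum_mono)
    fix a assume "a \<in> {a\<in>U. Q a}"
    then have "cnt d cls {a} \<le> t" using assms(3) by auto
    then show "card {j. j < d \<and> cls j = a} \<le> t" unfolding cnt_def by simp
  qed
  also have "\<dots> = card {a\<in>U. Q a} * t" by simp
  also have "\<dots> \<le> card U * t"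
  proof (rule mult_le_mono1)
    show "card {a\<in>U. Q a} \<le> card U" using assms(1) by (rule card_mono) auto
  qed
  finally show ?thesis .
qed

lemma core:
  fixes cls :: "nat \<Rightarrow> 'c" and R :: "'c \<Rightarrow> 'y set" and dr :: "'c \<Rightarrow> bool"
    and cp :: "'y \<Rightarrow> 'y \<Rightarrow> bool"
  assumes finU: "finite U" and cU: "card U \<le> Nc" and Nc1: "1 \<le> Nc"
    and clsU: "\<forall>j<d. cls j \<in> U"
    and cps: "\<forall>y z. cp y z \<longrightarrow> cp z y"
    and Kb: "Nc * theta Nc k Nc \<le> Kb"
    and nowit: "\<not> (\<exists>I. I \<subseteq> U \<and> goodw R dr cp d cls Kb I)"
  shows "\<exists>sel mate Pd. (\<forall>j<d. sel j \<in> R (cls j)) \<and>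
     (\<forall>j<d. (j \<in> Pd \<and> mate j < d \<and> mate j \<in> Pd \<and> mate (mate j) = j \<and> cp (sel j) (sel (mate j)))
            \<or> k + 1 \<le> card {q. q < d \<and> cp (sel j) (sel q)})"
proof -
  let ?rel = "crel R dr cp"
  obtain i where i: "i \<le> Nc"
    "\<forall>a\<in>U. \<not> (theta Nc k i \<le> cnt d cls {a} \<and> cnt d cls {a} < theta Nc k (Suc i))"
    using gap[OF finU cU Nc1, of k "\<lambda>a. cnt d cls {a}"] by blast
  define th where "th = theta Nc k i"
  define TH where "TH = theta Nc k (Suc i)"
  have TH_eq: "TH = Nc * th + Nc * (k + 1)" unfolding TH_def th_def by (simp add: algebra_simps)
  define heavy where "heavy = (\<lambda>a. TH \<le> cnt d cls {a})"
  define B where "B = (k + 1) * Nc"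
  have Bpos: "1 \<le> B" using Nc1 B_def by simp
  have cnt_out: "cnt d cls {a} = 0" if "a \<notin> U" for a
  proof -
    have "{j. j < d \<and> cls j \<in> {a}} = {}" using that clsU by auto
    then show ?thesis unfolding cnt_def by simp
  qed
  have light: "cnt d cls {a} \<le> th" if "\<not> heavy a" for a
  proof (cases "a \<in> U")
    case True
    then have "\<not> (th \<le> cnt d cls {a} \<and> cnt d cls {a} < TH)" using i(2) th_def TH_def by blast
    moreover have "cnt d cls {a} < TH" using that heavy_def by simp
    ultimately show ?thesis by linarith
  next
    case False then show ?thesis using cnt_out by simp
  qed
  define LP where "LP = {j. j < d \<and> \<not> heavy (cls j)}"
  have finLP: "finite LP" unfolding LP_def by simp
  have LPb: "card LP \<le> Nc * th"
  proof -
    have "card LP \<le> card U * th" unfolding LP_def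
      by (rule card_classes_le[OF finU clsU]) (simp add: light)
    also have "\<dots> \<le> Nc * th" using cU by (rule mult_le_mono1)
    finally show ?thesis .
  qed
  have thK: "Nc * th \<le> Kb"
  proof -
    have "th \<le> theta Nc k Nc" unfolding th_def using theta_mono[OF Nc1 i(1)] .
    then have "Nc * th \<le> Nc * theta Nc k Nc" by (rule mult_le_mono2)
    then show ?thesis using Kb by linarith
  qed
  have B_TH: "B + Nc * th \<le> TH" using TH_eq B_def by (simp add: algebra_simps)
  have thTH: "Nc * th < TH" using TH_eq Nc1 by simp
  have cntL: "cnt d cls X \<le> card LP" if "\<forall>b\<in>X. \<not> heavy b" for X
    unfolding cnt_def LP_def using that by (intro card_mono) auto
  have heavyU: "a \<in> U" if "heavy a" for a
  proof (rule ccontr)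
    assume "a \<notin> U"
    then have "cnt d cls {a} = 0" by (rule cnt_out)
    then show False using that heavy_def thTH by simp
  qed
  have crel_sym: "?rel b a" if "?rel a b" for a b
    using that cps unfolding crel_def by blast
  have crel_irr: "\<not> ?rel a a" for a unfolding crel_def by simp
  have hn: "\<exists>b. heavy b \<and> ?rel a b" if ha: "heavy a" for a
  proof (rule ccontr)
    assume nb: "\<not> (\<exists>b. heavy b \<and> ?rel a b)"
    have nl: "\<forall>b\<in>nbs R dr cp {a}. \<not> heavy b" using nb unfolding nbs_def by auto
    have "cnt d cls (nbs R dr cp {a}) \<le> card LP" using cntL nl by blast
    then have c1: "cnt d cls (nbs R dr cp {a}) \<le> Nc * th" using LPb by linarith
    have "goodw R dr cp d cls Kb {a}"
      unfolding goodw_def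
    proof (intro conjI)
      show "\<forall>x\<in>{a}. x \<notin> nbs R dr cp {a}" using crel_irr unfolding nbs_def by simp
      show "cnt d cls (nbs R dr cp {a}) < cnt d cls {a}" using c1 thTH ha heavy_def by simp
      show "cnt d cls (nbs R dr cp {a}) \<le> Kb" using c1 thK by linarith
    qed
    then show False using nowit heavyU[OF ha] by blast
  qed
  define h where "h = (\<lambda>a. SOME b. heavy b \<and> ?rel a b)"
  have h: "heavy (h a) \<and> ?rel a (h a)" if "heavy a" for a
    unfolding h_def using hn[OF that] by (rule someI_ex)
  define W0 where "W0 = (\<lambda>a b. SOME p. fst p \<in> R a \<and> snd p \<in> R b \<and> cp (fst p) (snd p))"
  define Wv where "Wv = (\<lambda>a b. if dr a then fst (W0 a b) else snd (W0 b a))"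
  have W0: "fst (W0 a b) \<in> R a \<and> snd (W0 a b) \<in> R b \<and> cp (fst (W0 a b)) (snd (W0 a b))"
    if ex: "\<exists>y\<in>R a. \<exists>z\<in>R b. cp y z" for a b
  proof -
    obtain y z where "y \<in> R a" "z \<in> R b" "cp y z" using ex by blast
    then have "\<exists>p. fst p \<in> R a \<and> snd p \<in> R b \<and> cp (fst p) (snd p)" by (intro exI[of _ "(y, z)"]) simp
    then show ?thesis unfolding W0_def by (rule someI_ex)
  qed
  have Wv: "Wv a b \<in> R a \<and> cp (Wv a b) (Wv b a)" if r: "?rel a b" for a b
  proof (cases "dr a")
    case True
    then have "\<not> dr b" using r unfolding crel_def by simp
    moreover have "\<exists>y\<in>R a. \<exists>z\<in>R b. cp y z" using r unfolding crel_def by simp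
    ultimately show ?thesis using W0[of a b] True unfolding Wv_def by simp
  next
    case False
    then have db: "dr b" using r unfolding crel_def by simp
    have "\<exists>y\<in>R b. \<exists>z\<in>R a. cp y z" using r cps unfolding crel_def by blast
    then show ?thesis using W0[of b a] False db cps unfolding Wv_def by simp
  qed
  obtain xs where xs: "set xs = U" "distinct xs" using finite_distinct_list[OF finU] by blast
  have lxs: "length xs \<le> Nc" using distinct_card[OF xs(2)] xs(1) cU by simp
  define idx where "idx = (\<lambda>a. THE n. n < length xs \<and> xs ! n = a)"
  have idx: "idx a < length xs \<and> xs ! idx a = a" if "a \<in> U" for a
  proof -
    have "\<exists>!n. n < length xs \<and> xs ! n = a" using distinct_Ex1[OF xs(2)] that xs(1) by blast
    then show ?thesis unfolding idx_def by (rule theI')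
  qed
  define pool where "pool = {p. p < d \<and> \<not> (heavy (cls p) \<and> rnk cls p < B)}"
  define Af where "Af = (\<lambda>j. {p \<in> pool. ?rel (cls j) (cls p)})"
  have Af_fin: "finite (\<Union>(Af ` J))" for J
  proof -
    have "\<Union>(Af ` J) \<subseteq> {..<d}" unfolding Af_def pool_def by auto
    then show ?thesis by (rule finite_subset) simp
  qed
  have onedir: "card J \<le> card (\<Union>(Af ` J))"
    if J: "J \<subseteq> LP" "\<forall>j\<in>J. dr (cls j) = \<delta>" for J \<delta>
  proof (rule ccontr)
    assume "\<not> card J \<le> card (\<Union>(Af ` J))"
    then have lt: "card (\<Union>(Af ` J)) < card J" by simp
    have finJ: "finite J" using J(1) finLP finite_subset by blast
    have cJ: "card J \<le> card LP" using J(1) finLP by (rule card_mono[rotated])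
    define I where "I = cls ` J"
    have nbl: "\<forall>b\<in>nbs R dr cp I. \<not> heavy b"
    proof (intro ballI notI)
      fix b assume b: "b \<in> nbs R dr cp I" and hb: "heavy b"
      obtain j where j: "j \<in> J" "?rel (cls j) b" using b unfolding nbs_def I_def by auto
      define PB where "PB = {p. p < d \<and> cls p = b \<and> rnk cls p \<in> {B..<cnt d cls {b}}}"
      have "PB \<subseteq> Af j" unfolding PB_def Af_def pool_def using j(2) by auto
      also have "\<dots> \<subseteq> \<Union>(Af ` J)" using j(1) by auto
      finally have "card PB \<le> card (\<Union>(Af ` J))" using Af_fin by (intro card_mono) auto
      moreover have "card PB = cnt d cls {b} - B" unfolding PB_def
        by (subst card_rnk) auto
      moreover have "TH \<le> cnt d cls {b}" using hb heavy_def by simp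
      ultimately show False using lt cJ LPb B_TH by linarith
    qed
    have un_eq: "\<Union>(Af ` J) = {p. p < d \<and> cls p \<in> nbs R dr cp I}"
    proof
      show "\<Union>(Af ` J) \<subseteq> {p. p < d \<and> cls p \<in> nbs R dr cp I}"
        unfolding Af_def pool_def nbs_def I_def by auto
      show "{p. p < d \<and> cls p \<in> nbs R dr cp I} \<subseteq> \<Union>(Af ` J)"
      proof
        fix p assume p: "p \<in> {p. p < d \<and> cls p \<in> nbs R dr cp I}"
        then have nh: "\<not> heavy (cls p)" using nbl by auto
        obtain j where "j \<in> J" "?rel (cls j) (cls p)" using p unfolding nbs_def I_def by auto
        then show "p \<in> \<Union>(Af ` J)" unfolding Af_def pool_def using p nh by auto
      qed
    qed
    have cI: "card J \<le> cnt d cls I"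
    proof -
      have "J \<subseteq> {j. j < d \<and> cls j \<in> I}" using J(1) unfolding LP_def I_def by auto
      then show ?thesis unfolding cnt_def by (intro card_mono) auto
    qed
    have "goodw R dr cp d cls Kb I"
      unfolding goodw_def
    proof (intro conjI)
      show "\<forall>a\<in>I. a \<notin> nbs R dr cp I"
        using J(2) unfolding nbs_def I_def crel_def by auto
      show "cnt d cls (nbs R dr cp I) < cnt d cls I"
        using lt cI un_eq unfolding cnt_def by simp
      have "cnt d cls (nbs R dr cp I) \<le> card LP" using cntL nbl by blast
      then show "cnt d cls (nbs R dr cp I) \<le> Kb" using LPb thK by linarith
    qed
    moreover have "I \<subseteq> U" using J(1) clsU unfolding I_def LP_def by auto
    ultimately show False using nowit by blast
  qed
  have hall_cond: "\<forall>J\<subseteq>LP. card J \<le> card (\<Union>(Af ` J))"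
  proof (intro allI impI)
    fix J assume J: "J \<subseteq> LP"
    define J1 where "J1 = {j\<in>J. dr (cls j)}"
    define J2 where "J2 = {j\<in>J. \<not> dr (cls j)}"
    have finJ: "finite J" using J finLP finite_subset by blast
    have "card J = card (J1 \<union> J2)" unfolding J1_def J2_def by (rule arg_cong[where f=card]) auto
    also have "\<dots> = card J1 + card J2" using finJ unfolding J1_def J2_def
      by (intro card_Un_disjoint) auto
    finally have cJ: "card J = card J1 + card J2" .
    have c1: "card J1 \<le> card (\<Union>(Af ` J1))" using J by (intro onedir[of J1 True]) (auto simp: J1_def)
    have c2: "card J2 \<le> card (\<Union>(Af ` J2))" using J by (intro onedir[of J2 False]) (auto simp: J2_def)
    have ueq: "\<Union>(Af ` J) = \<Union>(Af ` J1) \<union> \<Union>(Af ` J2)" unfolding J1_def J2_def by auto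
    have disj: "\<Union>(Af ` J1) \<inter> \<Union>(Af ` J2) = {}"
      unfolding J1_def J2_def Af_def crel_def by auto
    have "card (\<Union>(Af ` J)) = card (\<Union>(Af ` J1)) + card (\<Union>(Af ` J2))"
      unfolding ueq using Af_fin disj by (intro card_Un_disjoint) auto
    then show "card J \<le> card (\<Union>(Af ` J))" using cJ c1 c2 by linarith
  qed
  have Af_fin1: "\<forall>j\<in>LP. finite (Af j)" unfolding Af_def pool_def by auto
  obtain f where f: "inj_on f LP" "\<forall>j\<in>LP. f j \<in> Af j"
    using hall[OF finLP Af_fin1 hall_cond] by blast
  have f_rel: "\<forall>j\<in>LP. ?rel (cls j) (cls (f j))" using f(2) unfolding Af_def by auto
  have f_pool: "f ` LP \<subseteq> pool" using f(2) unfolding Af_def by auto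
  have rsym: "\<forall>x y. ?rel (cls x) (cls y) \<longrightarrow> ?rel (cls y) (cls x)" using crel_sym by blast
  have rdir: "\<forall>x y. ?rel (cls x) (cls y) \<longrightarrow> (dr (cls x) \<longleftrightarrow> \<not> dr (cls y))"
    unfolding crel_def by blast
  obtain mate Pd where mP: "LP \<subseteq> Pd" "Pd \<subseteq> LP \<union> f ` LP"
    "\<forall>j\<in>Pd. mate j \<in> Pd \<and> mate (mate j) = j \<and> ?rel (cls j) (cls (mate j))"
    using pairing[OF finLP f(1) f_rel rsym rdir] by blast
  have Pd_lt: "j < d" if "j \<in> Pd" for j
    using that mP(2) f_pool unfolding LP_def pool_def by auto
  have Pd_res: "\<not> (heavy (cls j) \<and> rnk cls j < B)" if "j \<in> Pd" for j
    using that mP(2) f_pool unfolding LP_def pool_def by auto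
  define tgt where "tgt = (\<lambda>p. if rnk cls p < B \<and> heavy (xs ! (rnk cls p div (k + 1)))
       \<and> ?rel (cls p) (xs ! (rnk cls p div (k + 1))) then xs ! (rnk cls p div (k + 1)) else h (cls p))"
  have tgt: "heavy (tgt p) \<and> ?rel (cls p) (tgt p)" if "heavy (cls p)" for p
    using h[OF that] unfolding tgt_def by auto
  define sel where "sel = (\<lambda>p. if p \<in> Pd then Wv (cls p) (cls (mate p)) else Wv (cls p) (tgt p))"
  have heavy_np: "heavy (cls j)" if "j < d" "j \<notin> Pd" for j
    using that mP(1) unfolding LP_def by auto
  have selR: "\<forall>j<d. sel j \<in> R (cls j)"
  proof (intro allI impI)
    fix j assume jd: "j < d"
    show "sel j \<in> R (cls j)"
    proof (cases "j \<in> Pd")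
      case True then show ?thesis using mP(3) Wv unfolding sel_def by auto
    next
      case False then show ?thesis using tgt[OF heavy_np[OF jd False]] Wv unfolding sel_def by auto
    qed
  qed
  have main: "(j \<in> Pd \<and> mate j < d \<and> mate j \<in> Pd \<and> mate (mate j) = j \<and> cp (sel j) (sel (mate j)))
            \<or> k + 1 \<le> card {q. q < d \<and> cp (sel j) (sel q)}" if jd: "j < d" for j
  proof (cases "j \<in> Pd")
    case True
    then have m: "mate j \<in> Pd" "mate (mate j) = j" "?rel (cls j) (cls (mate j))" using mP(3) by auto
    have "cp (sel j) (sel (mate j))" using Wv[OF m(3)] True m(1,2) unfolding sel_def by simp
    then show ?thesis using True m Pd_lt by blast
  next
    case False
    define a where "a = cls j"
    have ha: "heavy a" using heavy_np[OF jd False] a_def by simp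
    define b where "b = tgt j"
    have hb: "heavy b" and rab: "?rel a b" using tgt[OF heavy_np[OF jd False]] a_def b_def by auto
    have aU: "a \<in> U" using heavyU[OF ha] .
    define n where "n = idx a"
    have n: "n < length xs" "xs ! n = a" using idx[OF aU] n_def by auto
    define X where "X = {n * (k + 1)..<n * (k + 1) + (k + 1)}"
    define Q where "Q = {q. q < d \<and> cls q = b \<and> rnk cls q \<in> X}"
    have nB: "n * (k + 1) + (k + 1) \<le> B"
    proof -
      have "Suc n \<le> Nc" using n(1) lxs by simp
      then have "Suc n * (k + 1) \<le> Nc * (k + 1)" by (rule mult_le_mono1)
      then show ?thesis unfolding B_def by (simp add: algebra_simps)
    qed
    have Xsub: "X \<subseteq> {..<cnt d cls {b}}"
    proof -
      have "B \<le> cnt d cls {b}" using hb heavy_def B_TH by simp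
      then show ?thesis using nB unfolding X_def by auto
    qed
    have cQ: "card Q = k + 1" unfolding Q_def using card_rnk[OF Xsub] X_def by simp
    have selj: "sel j = Wv a b" using False unfolding sel_def a_def b_def by simp
    have "Q \<subseteq> {q. q < d \<and> cp (sel j) (sel q)}"
    proof
      fix q assume q: "q \<in> Q"
      have qd: "q < d" and cq: "cls q = b" and rq: "rnk cls q \<in> X" using q unfolding Q_def by auto
      have rB: "rnk cls q < B" using rq nB unfolding X_def by auto
      have qnP: "q \<notin> Pd" using Pd_res rB hb cq by blast
      have dv: "rnk cls q div (k + 1) = n"
        using rq unfolding X_def by (intro div_nat_eqI) (auto simp: algebra_simps)
      have "tgt q = a" unfolding tgt_def using rB dv n(2) ha crel_sym[OF rab] cq by simp
      then have "sel q = Wv b a" using qnP cq unfolding sel_def by simp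
      then show "q \<in> {q. q < d \<and> cp (sel j) (sel q)}" using selj Wv[OF rab] qd by simp
    qed
    then have "card Q \<le> card {q. q < d \<and> cp (sel j) (sel q)}" by (intro card_mono) auto
    then show ?thesis using cQ by simp
  qed
  show ?thesis using selR main by blast
qed

lemma dbl_eq: "{#a, b#} = {#c, d#} \<longleftrightarrow> (a = c \<and> b = d) \<or> (a = d \<and> b = c)"
  by (auto simp: add_eq_conv_ex)

lemma sw_edge: "{#a, b#} \<in> edgec (superweak k) D \<longleftrightarrow>
   (fst a \<noteq> fst b \<or> (snd a = NoPtr \<and> snd b = NoPtr) \<or> snd a = Accept \<or> snd b = Accept)"
proof
  assume "{#a, b#} \<in> edgec (superweak k) D"
  then obtain y y' z z' where eq: "{#a, b#} = {#(y, y'), (z, z')#}"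
    and c: "y \<noteq> z \<or> (y' = NoPtr \<and> z' = NoPtr) \<or> y' = Accept \<or> z' = Accept"
    unfolding superweak_def by auto
  from eq have "(a = (y, y') \<and> b = (z, z')) \<or> (a = (z, z') \<and> b = (y, y'))" by (simp add: dbl_eq)
  then show "fst a \<noteq> fst b \<or> (snd a = NoPtr \<and> snd b = NoPtr) \<or> snd a = Accept \<or> snd b = Accept"
    using c by auto
next
  assume c: "fst a \<noteq> fst b \<or> (snd a = NoPtr \<and> snd b = NoPtr) \<or> snd a = Accept \<or> snd b = Accept"
  have "\<exists>y y' z z'. {#a, b#} = {#(y, y'), (z, z')#} \<and>
     (y \<noteq> z \<or> (y' = NoPtr \<and> z' = NoPtr) \<or> y' = Accept \<or> z' = Accept)"
    using c by (intro exI[of _ "fst a"] exI[of _ "snd a"] exI[of _ "fst b"] exI[of _ "snd b"]) simp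
  then show "{#a, b#} \<in> edgec (superweak k) D" unfolding superweak_def by simp
qed

lemma compat_sym: "compat P D Y Z \<longleftrightarrow> compat P D Z Y"
  unfolding compat_def by (metis add_mset_commute)

lemma perm_all2:
  assumes "mset xs = mset Ys" "list_all2 R ys xs"
  shows "\<exists>ys'. list_all2 R ys' Ys \<and> mset ys' = mset ys"
proof -
  obtain p where p: "p permutes {..<length xs}" "permute_list p xs = Ys"
    using mset_eq_permutation[of Ys xs] assms(1) by metis
  have len: "length ys = length xs" using assms(2) by (rule list_all2_lengthD)
  then have p': "p permutes {..<length ys}" using p(1) by simp
  have "list_all2 R (permute_list p ys) (permute_list p xs)"
    using list_all2_permute_list_iff[OF p', of R xs] assms(2) by blast
  moreover have "mset (permute_list p ys) = mset ys" using p' by simp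
  ultimately show ?thesis using p(2) by blast
qed

lemma size_filter_map:
  "size (filter_mset P (mset (map f [0..<d]))) = card {j. j < d \<and> P (f j)}"
proof -
  have "size (filter_mset P (mset (map f [0..<d]))) = length (filter P (map f [0..<d]))"
    by (metis mset_filter size_mset)
  also have "\<dots> = card {j. j < d \<and> P (f j)}" unfolding length_filter_conv_card by (rule arg_cong[where f=card]) auto
  finally show ?thesis .
qed

lemma valid_from_node:
  assumes "mset (map out [0..<d]) \<in> h'_one P D"
    and "\<forall>j<d. sel j \<in> out j"
  shows "\<exists>l. (\<forall>j<d. l j \<in> sel j) \<and> mset (map l [0..<d]) \<in> nodec P D"
proof -
  obtain Ys where Ys: "mset (map out [0..<d]) = mset Ys" "allsel P D Ys"
    using assms(1) unfolding h'_one_def by blast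
  have "list_all2 (\<in>) (map sel [0..<d]) (map out [0..<d])"
    using assms(2) by (simp add: list_all2_conv_all_nth)
  then obtain ss where ss: "list_all2 (\<in>) ss Ys" "mset ss = mset (map sel [0..<d])"
    using perm_all2[OF Ys(1)] by blast
  have "mset ss \<in> h_half P D" using Ys(2) ss(1) unfolding allsel_def by blast
  then have "mset (map sel [0..<d]) \<in> h_half P D" using ss(2) by simp
  then obtain Ys2 ls where Y2: "mset (map sel [0..<d]) = mset Ys2" "list_all2 (\<in>) ls Ys2" "mset ls \<in> nodec P D"
    unfolding h_half_def by blast
  obtain ls' where ls': "list_all2 (\<in>) ls' (map sel [0..<d])" "mset ls' = mset ls"
    using perm_all2[of Ys2 "map sel [0..<d]" "(\<in>)" ls] Y2(1,2) by metis
  have len: "length ls' = d" using ls'(1) by (simp add: list_all2_lengthD)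
  have "map (\<lambda>j. ls' ! j) [0..<d] = ls'" using len map_nth[of ls'] by simp
  moreover have "\<forall>j<d. ls' ! j \<in> sel j" using ls'(1) by (auto simp add: list_all2_conv_all_nth)
  ultimately show ?thesis using ls'(2) Y2(3) by (intro exI[of _ "\<lambda>j. ls' ! j"]) simp
qed

lemma demand_forces_accept:
  assumes "compat (superweak k) D y z" "a \<in> y" "b \<in> z" "fst a = fst b" "snd a = Demand"
  shows "snd b = Accept"
proof -
  have "{#a, b#} \<in> edgec (superweak k) D" using assms(1-3) unfolding compat_def by blast
  then show ?thesis using assms(4,5) unfolding sw_edge by auto
qed

lemma lemA:
  assumes l: "\<forall>j<d. l j \<in> sel j"
    and nd: "mset (map l [0..<d]) \<in> nodec (superweak k) D"
    and st: "\<forall>j<d. (j \<in> Pd \<and> mate j < d \<and> mate j \<in> Pd \<and> mate (mate j) = j \<and>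
               compat (superweak k) D (sel j) (sel (mate j)))
             \<or> k + 1 \<le> card {q. q < d \<and> compat (superweak k) D (sel j) (sel q)}"
  shows False
proof -
  let ?M = "mset (map l [0..<d])"
  obtain c where c: "\<forall>x\<in>#?M. fst x = c"
    and cnt1: "size (filter_mset (\<lambda>x. snd x = Accept) ?M) < size (filter_mset (\<lambda>x. snd x = Demand) ?M)"
    and cnt2: "size (filter_mset (\<lambda>x. snd x = Accept) ?M) \<le> k"
    using nd unfolding superweak_def by auto
  define Dm where "Dm = {j. j < d \<and> snd (l j) = Demand}"
  define Ac where "Ac = {j. j < d \<and> snd (l j) = Accept}"
  have cDA: "card Ac < card Dm" using cnt1 unfolding Dm_def Ac_def size_filter_map .
  have cA: "card Ac \<le> k" using cnt2 unfolding Ac_def size_filter_map .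
  have col: "fst (l j) = c" if "j < d" for j using c that by simp
  have acc: "snd (l q) = Accept"
    if "j \<in> Dm" "q < d" "compat (superweak k) D (sel j) (sel q)" for j q
  proof (rule demand_forces_accept[OF that(3)])
    show "l j \<in> sel j" "l q \<in> sel q" using l that(1,2) unfolding Dm_def by auto
    show "fst (l j) = fst (l q)" using col that(1,2) unfolding Dm_def by auto
    show "snd (l j) = Demand" using that(1) unfolding Dm_def by auto
  qed
  have paired: "j \<in> Pd \<and> mate j < d \<and> mate (mate j) = j \<and> mate j \<in> Ac" if jD: "j \<in> Dm" for j
  proof -
    have jd: "j < d" using jD unfolding Dm_def by simp
    show ?thesis
    proof (cases "k + 1 \<le> card {q. q < d \<and> compat (superweak k) D (sel j) (sel q)}")
      case True
      have "{q. q < d \<and> compat (superweak k) D (sel j) (sel q)} \<subseteq> Ac"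
        using acc[OF jD] unfolding Ac_def by auto
      then have "card {q. q < d \<and> compat (superweak k) D (sel j) (sel q)} \<le> card Ac"
        by (intro card_mono) (auto simp: Ac_def)
      then show ?thesis using True cA by linarith
    next
      case False
      then have "j \<in> Pd \<and> mate j < d \<and> mate (mate j) = j \<and> compat (superweak k) D (sel j) (sel (mate j))"
        using st jd by blast
      then show ?thesis using acc[OF jD] unfolding Ac_def by auto
    qed
  qed
  have injm: "inj_on mate Dm"
  proof (rule inj_onI)
    fix x y assume "x \<in> Dm" "y \<in> Dm" "mate x = mate y"
    then show "x = y" using paired by metis
  qed
  have subm: "mate ` Dm \<subseteq> Ac" using paired by auto
  have finAc: "finite Ac" unfolding Ac_def by simp
  have "card Dm \<le> card Ac" by (rule card_inj_on_le[OF injm subm finAc])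
  then show False using cDA by linarith
qed

definition Mk :: "nat \<Rightarrow> (nat \<times> ptr) set set" where
  "Mk k = {y. y \<subseteq> {1..k} \<times> UNIV \<and> {1..k} \<times> {Accept} \<subseteq> y}"

lemma gh_Mk:
  assumes "{#y, z#} \<in> g'_half (superweak k) D"
  shows "y \<in> Mk k \<and> z \<in> Mk k \<and> compat (superweak k) D y z"
proof -
  let ?P = "superweak k"
  obtain Y Z where eq: "{#y, z#} = {#Y, Z#}" and Y: "Y \<in> f_half ?P D" and Z: "Z \<in> f_half ?P D"
    and cYZ: "compat ?P D Y Z"
    and mY: "\<forall>Y'. Y \<subseteq> Y' \<and> Y' \<in> f_half ?P D \<and> compat ?P D Y' Z \<longrightarrow> Y' = Y"
    and mZ: "\<forall>Z'. Z \<subseteq> Z' \<and> Z' \<in> f_half ?P D \<and> compat ?P D Y Z' \<longrightarrow> Z' = Z"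
    using assms unfolding g'_half_def by blast
  have fh: "f_half ?P D = Pow ({1..k} \<times> UNIV)" unfolding f_half_def superweak_def by simp
  have accY: "compat ?P D (X \<union> {1..k} \<times> {Accept}) W" if "compat ?P D X W" for X W
    using that unfolding compat_def by (auto simp: sw_edge)
  have "Y \<union> {1..k} \<times> {Accept} = Y" using mY Y fh accY[OF cYZ] by auto
  then have YM: "Y \<in> Mk k" using Y fh unfolding Mk_def by auto
  have cZY: "compat ?P D Z Y" using cYZ compat_sym by blast
  have "compat ?P D Y (Z \<union> {1..k} \<times> {Accept})" using accY[OF cZY] compat_sym by blast
  then have "Z \<union> {1..k} \<times> {Accept} = Z" using mZ Z fh by auto
  then have ZM: "Z \<in> Mk k" using Z fh unfolding Mk_def by auto
  from eq have "(y = Y \<and> z = Z) \<or> (y = Z \<and> z = Y)" by (simp add: dbl_eq)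
  then show ?thesis using YM ZM cYZ cZY by auto
qed

lemma ptr_cases: "p = Demand \<or> p = Accept \<or> p = NoPtr" by (cases p) auto

lemma Mk_sub: "Mk k \<subseteq> (\<lambda>w. {1..k} \<times> {Accept} \<union> w) ` Pow ({1..k} \<times> {Demand, NoPtr})"
proof
  fix y assume y: "y \<in> Mk k"
  have "y = {1..k} \<times> {Accept} \<union> (y \<inter> ({1..k} \<times> {Demand, NoPtr}))"
  proof
    show "y \<subseteq> {1..k} \<times> {Accept} \<union> (y \<inter> ({1..k} \<times> {Demand, NoPtr}))"
    proof
      fix x assume "x \<in> y"
      then show "x \<in> {1..k} \<times> {Accept} \<union> (y \<inter> ({1..k} \<times> {Demand, NoPtr}))"
        using y ptr_cases[of "snd x"] unfolding Mk_def by (cases x) auto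
    qed
    show "{1..k} \<times> {Accept} \<union> (y \<inter> ({1..k} \<times> {Demand, NoPtr})) \<subseteq> y"
      using y unfolding Mk_def by auto
  qed
  then show "y \<in> (\<lambda>w. {1..k} \<times> {Accept} \<union> w) ` Pow ({1..k} \<times> {Demand, NoPtr})" by blast
qed

lemma Mk_fin: "finite (Mk k)"
  using Mk_sub by (rule finite_subset) simp

lemma Mk_card: "card (Mk k) \<le> 4 ^ k"
proof -
  have "card (Mk k) \<le> card ((\<lambda>w. {1..k} \<times> {Accept} \<union> w) ` Pow ({1..k} \<times> {Demand, NoPtr}))"
    using Mk_sub by (rule card_mono[rotated]) simp
  also have "\<dots> \<le> card (Pow ({1..k} \<times> {Demand, NoPtr}))" by (rule card_image_le) simp
  also have "\<dots> = 2 ^ (k * 2)" by (simp add: card_Pow card_cartesian_product)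
  also have "\<dots> = 4 ^ k" unfolding mult.commute[of k 2] power_mult by simp
  finally show ?thesis .
qed

lemma pow45: "2 \<le> k \<Longrightarrow> 4 ^ k + 2 * k + 2 \<le> (5::nat) ^ k"
proof (induct k rule: dec_induct)
  case base then show ?case by simp
next
  case (step n)
  have "4 ^ Suc n + 2 * Suc n + 2 \<le> 5 * (4 ^ n + 2 * n + 2)" by simp
  also have "\<dots> \<le> 5 * 5 ^ n" using step(3) by simp
  finally show ?case by simp
qed

lemma arith_K:
  assumes k2: "2 \<le> k"
  shows "(2::nat) ^ (4 ^ k + 1) * theta (2 ^ (4 ^ k + 1)) k (2 ^ (4 ^ k + 1)) \<le> 2 ^ (2 ^ (5 ^ k))"
proof -
  define m :: nat where "m = 4 ^ k + 1"
  define Nc where "Nc = (2::nat) ^ m"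
  have four: "(4::nat) ^ k = 2 ^ (2 * k)" by (simp add: power_mult)
  have k2k: "k + 1 \<le> 2 ^ k" using less_exp[of k] by (simp add: Suc_le_eq)
  have "(2::nat) ^ k \<le> 2 ^ (2 * k)" by (rule power_increasing) simp_all
  then have km: "k \<le> m" using less_exp[of k] four unfolding m_def by linarith
  have "(2::nat) ^ k \<le> 2 ^ m" using km by (rule power_increasing) simp
  then have kN: "k + 1 \<le> Nc" using k2k Nc_def by linarith
  have mN: "m \<le> Nc" using less_exp[of m] Nc_def by simp
  have pw: "(2 * Nc) ^ Nc = 2 ^ ((m + 1) * Nc)"
  proof -
    have "2 * Nc = 2 ^ (m + 1)" unfolding Nc_def by simp
    then have "(2 * Nc) ^ Nc = (2 ^ (m + 1)) ^ Nc" by simp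
    also have "\<dots> = 2 ^ ((m + 1) * Nc)" by (rule power_mult[symmetric])
    finally show ?thesis .
  qed
  have "theta Nc k Nc \<le> (k + 1) * (2 * Nc) ^ Nc" by (rule theta_bound)
  then have "Nc * theta Nc k Nc \<le> Nc * ((k + 1) * 2 ^ ((m + 1) * Nc))" using pw by simp
  also have "\<dots> \<le> Nc * (Nc * 2 ^ ((m + 1) * Nc))"
    by (intro mult_le_mono2 mult_le_mono1 kN)
  also have "\<dots> = 2 ^ (m + m + (m + 1) * Nc)" unfolding Nc_def by (simp add: power_add)
  also have "\<dots> \<le> 2 ^ (2 ^ (5 ^ k))"
  proof (rule power_increasing)
    have m3: "m + 3 \<le> 2 ^ (2 * k + 1)"
    proof -
      have "(4::nat) ^ 1 \<le> 4 ^ k" by (rule power_increasing) (use k2 in simp_all)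
      then show ?thesis unfolding m_def using four by simp
    qed
    have "m + m + (m + 1) * Nc \<le> (m + 3) * Nc" using mN by (simp add: algebra_simps)
    also have "\<dots> \<le> 2 ^ (2 * k + 1) * 2 ^ m" using m3 Nc_def by simp
    also have "\<dots> = 2 ^ (4 ^ k + 2 * k + 2)" unfolding m_def by (simp add: power_add[symmetric])
    also have "\<dots> \<le> 2 ^ (5 ^ k)" by (rule power_increasing) (use pow45[OF k2] in simp_all)
    finally show "m + m + (m + 1) * Nc \<le> 2 ^ (5 ^ k)" .
  qed simp
  finally show ?thesis unfolding Nc_def m_def .
qed

fun vins :: "'l view \<Rightarrow> 'l list" where "vins (View a b) = a"

lemma vins_tview: "vins (tview G t v) = map (\<lambda>i. inp G (v, i)) [0..<deg G v]"
  by (cases t) simp_all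

lemma edge_rel:
  assumes "{#Y, Z#} \<in> g_one (superweak k) D"
  shows "\<exists>y\<in>Y \<inter> Mk k. \<exists>z\<in>Z \<inter> Mk k. compat (superweak k) D y z"
proof -
  obtain Y' Z' y z where eq: "{#Y, Z#} = {#Y', Z'#}" "y \<in> Y'" "z \<in> Z'" "{#y, z#} \<in> g'_half (superweak k) D"
    using assms unfolding g_one_def by blast
  have g: "y \<in> Mk k \<and> z \<in> Mk k \<and> compat (superweak k) D y z" using gh_Mk[OF eq(4)] .
  from eq(1) have "(Y = Y' \<and> Z = Z') \<or> (Y = Z' \<and> Z = Y')" by (simp add: dbl_eq)
  then show ?thesis
  proof
    assume "Y = Y' \<and> Z = Z'" then show ?thesis using eq g by blast
  next
    assume "Y = Z' \<and> Z = Y'" then show ?thesis using eq g compat_sym by blast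
  qed
qed

theorem lemma7:
  fixes k t :: nat
    and Gs :: "('v, 'l) pgraph set"
    and orient :: "'l \<Rightarrow> bool"
    and A :: "('l, (nat \<times> ptr) set set) pn_alg"
  assumes "k \<ge> 2"
    and "\<forall>G \<in> Gs. pn_graph G"
    and "\<forall>G \<in> Gs. \<forall>v \<in> verts G. deg G v = maxdeg G"
    and "\<forall>G \<in> Gs. maxdeg G \<ge> 2 ^ (4 ^ k + 1)"
    and "\<forall>G \<in> Gs. \<forall>v \<in> verts G. \<forall>i < deg G v.
           orient (inp G (v, i)) \<noteq> orient (inp G (port G (v, i)))"
    and "pn_solves (derived_one (superweak k)) Gs A t"
  shows "\<exists>A' :: ('l, nat \<times> ptr) pn_alg.
           pn_solves (superweak (2 ^ (2 ^ (5 ^ k)))) Gs A' t"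
proof -
  define K' :: nat where "K' = 2 ^ (2 ^ (5 ^ k))"
  define Nc :: nat where "Nc = 2 ^ (4 ^ k + 1)"
  define U where "U = Pow (Mk k) \<times> (UNIV :: bool set)"
  have finU: "finite U" unfolding U_def using Mk_fin by simp
  have cU: "card U \<le> Nc"
  proof -
    have "card U = 2 ^ card (Mk k) * 2" unfolding U_def using Mk_fin
      by (simp add: card_cartesian_product card_Pow)
    also have "\<dots> \<le> 2 ^ (4 ^ k) * 2" by (intro mult_le_mono1 power_increasing Mk_card) simp
    also have "\<dots> = Nc" unfolding Nc_def by simp
    finally show ?thesis .
  qed
  have Nc1: "1 \<le> Nc" unfolding Nc_def by simp
  have KbNc: "Nc * theta Nc k Nc \<le> K'" unfolding Nc_def K'_def using arith_K[OF assms(1)] .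
  have cPU: "card (Pow U) \<le> K'"
  proof -
    have "card (Pow U) = 2 ^ card U" using finU by (simp add: card_Pow)
    also have "\<dots> \<le> 2 ^ Nc" using cU by (intro power_increasing) simp_all
    also have "\<dots> \<le> K'" unfolding Nc_def K'_def
    proof (rule power_increasing)
      have "4 ^ k + 1 \<le> (5::nat) ^ k" using pow45[OF assms(1)] by simp
      then show "(2::nat) ^ (4 ^ k + 1) \<le> 2 ^ 5 ^ k" by (rule power_increasing) simp
    qed simp
    finally show ?thesis .
  qed
  obtain enc where enc: "bij_betw enc (Pow U) {0..<card (Pow U)}"
    using ex_bij_betw_finite_nat[of "Pow U"] finU by auto
  define cls where "cls = (\<lambda>n D w j. (A n D w j \<inter> Mk k, orient (vins w ! j)))"
  define Isel where "Isel = (\<lambda>n D w. SOME I. I \<subseteq> U \<and>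
      goodw fst snd (compat (superweak k) D) (length (vins w)) (cls n D w) K' I)"
  define A' :: "('l, nat \<times> ptr) pn_alg" where "A' = (\<lambda>n D w i. (enc (Isel n D w) + 1,
       if cls n D w i \<in> Isel n D w then Demand
       else if cls n D w i \<in> nbs fst snd (compat (superweak k) D) (Isel n D w) then Accept else NoPtr))"
  have "pn_solves (superweak K') Gs A' t"
    unfolding pn_solves_def
  proof
    fix G assume G: "G \<in> Gs"
    define \<Delta> where "\<Delta> = maxdeg G"
    define n where "n = num_nodes G"
    define out where "out = alg_out A t G"
    define tv where "tv = tview G t"
    have pg: "pn_graph G" using assms(2) G by blast
    have degv: "\<forall>v\<in>verts G. deg G v = \<Delta>" using assms(3) G \<Delta>_def by blast
    have sol: "solves_with (derived_one (superweak k)) G out"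
      using assms(6) G unfolding pn_solves_def out_def by blast
    have outA: "A n \<Delta> (tv v) j = out (v, j)" for v j
      unfolding out_def alg_out_def n_def \<Delta>_def tv_def by simp
    have out'A: "alg_out A' t G (v, i) = A' n \<Delta> (tv v) i" for v i
      unfolding alg_out_def n_def \<Delta>_def tv_def by simp
    have len: "length (vins (tv v)) = deg G v" for v unfolding tv_def by (simp add: vins_tview)
    have nth: "j < deg G v \<Longrightarrow> vins (tv v) ! j = inp G (v, j)" for v j
      unfolding tv_def by (simp add: vins_tview)
    let ?cp = "compat (superweak k) \<Delta>"
    define C where "C = (\<lambda>v. cls n \<Delta> (tv v))"
    have C: "j < deg G v \<Longrightarrow> C v j = (out (v, j) \<inter> Mk k, orient (inp G (v, j)))" for v j
      unfolding C_def cls_def using outA nth by simp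
    have CU: "C v j \<in> U" for v j unfolding C_def cls_def U_def by auto
    have cps: "\<forall>y z. ?cp y z \<longrightarrow> ?cp z y" using compat_sym by blast
    have wit: "\<exists>I. I \<subseteq> U \<and> goodw fst snd ?cp \<Delta> (C v) K' I" if v: "v \<in> verts G" for v
    proof (rule ccontr)
      assume nw: "\<not> (\<exists>I. I \<subseteq> U \<and> goodw fst snd ?cp \<Delta> (C v) K' I)"
      have CU': "\<forall>j<\<Delta>. C v j \<in> U" using CU by blast
      obtain sel mate Pd where sm: "\<forall>j<\<Delta>. sel j \<in> fst (C v j)"
        "\<forall>j<\<Delta>. (j \<in> Pd \<and> mate j < \<Delta> \<and> mate j \<in> Pd \<and> mate (mate j) = j \<and> ?cp (sel j) (sel (mate j)))
            \<or> k + 1 \<le> card {q. q < \<Delta> \<and> ?cp (sel j) (sel q)}"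
        using core[OF finU cU Nc1 CU' cps KbNc nw] by blast
      have hn: "mset (map (\<lambda>j. out (v, j)) [0..<\<Delta>]) \<in> h'_one (superweak k) \<Delta>"
        using sol v degv unfolding solves_with_def derived_one_def \<Delta>_def by auto
      have "\<forall>j<\<Delta>. sel j \<in> out (v, j)" using sm(1) C degv v by auto
      then obtain l where l: "\<forall>j<\<Delta>. l j \<in> sel j" "mset (map l [0..<\<Delta>]) \<in> nodec (superweak k) \<Delta>"
        using valid_from_node[OF hn] by blast
      show False using lemA[OF l sm(2)] .
    qed
    define I where "I = (\<lambda>v. Isel n \<Delta> (tv v))"
    have Isel_eq: "Isel n \<Delta> (tv v) = (SOME I. I \<subseteq> U \<and> goodw fst snd ?cp \<Delta> (C v) K' I)"
      if "v \<in> verts G" for v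
      unfolding Isel_def C_def using len degv that by simp
    have Ig: "I v \<subseteq> U \<and> goodw fst snd ?cp \<Delta> (C v) K' (I v)" if v: "v \<in> verts G" for v
      unfolding I_def Isel_eq[OF v] using wit[OF v] by (rule someI_ex)
    have out': "alg_out A' t G (v, i) = (enc (I v) + 1, if C v i \<in> I v then Demand
       else if C v i \<in> nbs fst snd ?cp (I v) then Accept else NoPtr)" for v i
      unfolding out'A by (simp add: A'_def I_def C_def)
    have encr: "enc (I v) < card (Pow U)" if "v \<in> verts G" for v
      using enc Ig[OF that] unfolding bij_betw_def by auto
    have encinj: "I v = I u" if "v \<in> verts G" "u \<in> verts G" "enc (I v) = enc (I u)" for v u
      using enc Ig[OF that(1)] Ig[OF that(2)] that(3) unfolding bij_betw_def inj_on_def by blast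
    have disj: "C v j \<notin> nbs fst snd ?cp (I v)" if "v \<in> verts G" "C v j \<in> I v" for v j
      using Ig[OF that(1)] that(2) unfolding goodw_def by blast
    have outs_ok: "alg_out A' t G (v, i) \<in> outs (superweak K') (maxdeg G)"
      if "v \<in> verts G" for v i
    proof -
      have "enc (I v) + 1 \<in> {1..K'}" using encr[OF that] cPU by simp
      then show ?thesis unfolding out' superweak_def by simp
    qed
    have edge_ok: "{#alg_out A' t G (v, i), alg_out A' t G (port G (v, i))#} \<in> edgec (superweak K') (maxdeg G)"
      if v: "v \<in> verts G" and i: "i < deg G v" for v i
    proof -
      obtain u j where uj: "port G (v, i) = (u, j)" by (cases "port G (v, i)") auto
      have u: "u \<in> verts G" and j: "j < deg G u"
        using pg v i uj unfolding pn_graph_def by (metis fst_conv snd_conv)+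
      have "{#out (v, i), out (port G (v, i))#} \<in> edgec (derived_one (superweak k)) (maxdeg G)"
        using sol v i unfolding solves_with_def by blast
      then have "{#out (v, i), out (u, j)#} \<in> g_one (superweak k) \<Delta>"
        using uj unfolding derived_one_def \<Delta>_def by simp
      then obtain y z where yz: "y \<in> out (v, i) \<inter> Mk k" "z \<in> out (u, j) \<inter> Mk k" "?cp y z"
        using edge_rel by blast
      have or: "orient (inp G (v, i)) \<noteq> orient (inp G (u, j))"
        using assms(5) G v i uj by metis
      have cr: "crel fst snd ?cp (C v i) (C u j)"
        unfolding crel_def C[OF i] C[OF j] using or yz by auto
      have cr': "crel fst snd ?cp (C u j) (C v i)"
        unfolding crel_def C[OF i] C[OF j] using or yz cps by auto
      show ?thesis
      proof (cases "enc (I v) = enc (I u)")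
        case False
        then show ?thesis unfolding uj out' sw_edge by simp
      next
        case True
        then have Iuv: "I u = I v" using encinj[OF v u] by simp
        show ?thesis
        proof (cases "C v i \<in> I v")
          case True
          have nb: "C u j \<in> nbs fst snd ?cp (I v)" unfolding nbs_def mem_Collect_eq Bex_def
            by (intro exI[of _ "C v i"] conjI True cr)
          have "C u j \<notin> I u"
          proof
            assume "C u j \<in> I u"
            then have "C u j \<notin> nbs fst snd ?cp (I u)" by (rule disj[OF u])
            then show False using nb Iuv by simp
          qed
          then show ?thesis unfolding uj out' sw_edge using Iuv \<open>C u j \<in> nbs fst snd ?cp (I v)\<close> by simp
        next
          case False
          show ?thesis
          proof (cases "C u j \<in> I u")
            case True
            then have uI: "C u j \<in> I v" using Iuv by simp
            have "C v i \<in> nbs fst snd ?cp (I v)" unfolding nbs_def mem_Collect_eq Bex_def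
              by (intro exI[of _ "C u j"] conjI uI cr')
            then show ?thesis unfolding uj out' sw_edge using False by simp
          next
            case False2: False
            show ?thesis unfolding uj out' sw_edge using False False2 by auto
          qed
        qed
      qed
    qed
    have node_ok: "mset (map (\<lambda>i. alg_out A' t G (v, i)) [0..<deg G v]) \<in> nodec (superweak K') (maxdeg G)"
      if v: "v \<in> verts G" for v
    proof -
      let ?f = "\<lambda>i. alg_out A' t G (v, i)"
      let ?M = "mset (map ?f [0..<deg G v])"
      have dv: "deg G v = \<Delta>" using degv v by blast
      have g: "goodw fst snd ?cp \<Delta> (C v) K' (I v)" using Ig[OF v] by blast
      have e1: "enc (I v) + 1 \<in> {1..K'}" using encr[OF v] cPU by simp
      have s1: "size ?M = maxdeg G" using dv \<Delta>_def by simp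
      have s2: "set_mset ?M \<subseteq> {1..K'} \<times> UNIV" using e1 by (auto simp: out')
      have s3: "\<forall>x\<in>#?M. fst x = enc (I v) + 1" by (auto simp: out')
      have dm: "size (filter_mset (\<lambda>x. snd x = Demand) ?M) = cnt \<Delta> (C v) (I v)"
        unfolding size_filter_map cnt_def dv by (rule arg_cong[where f=card]) (auto simp: out')
      have ac: "size (filter_mset (\<lambda>x. snd x = Accept) ?M) = cnt \<Delta> (C v) (nbs fst snd ?cp (I v))"
        unfolding size_filter_map cnt_def dv using disj[OF v]
        by (intro arg_cong[where f=card]) (auto simp: out')
      show ?thesis unfolding superweak_def using s1 s2 s3 dm ac g unfolding goodw_def by auto
    qed
    show "solves_with (superweak K') G (alg_out A' t G)"
      unfolding solves_with_def using outs_ok edge_ok node_ok by blast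
  qed
  then show ?thesis unfolding K'_def by blast
qed

end
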